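(* Let $\Gamma$ be a distance-regular graph with classical parameters $(D,b,\alpha,\beta)$ such that $b\ge2$, $b-1\ge\alpha\ge1$ and $D\ge3$, geometric with respect to a set $\mathcal C$ of Delsarte cliques. Let $r=[D]$. Assume that for every vertex $x$ the local graph at $x$ is the $\alpha$-clique extension of a $\frac{\beta}{\alpha}\times r$-grid, and assume $\beta>\alpha r$. Then: (a) for every assembly $M$ and every vertex $x$ at distance $i$ from $M$ ($i=0,1,\dots,D$), the number of vertices of $M$ at distance $i$ from $x$ equals $1+\alpha[i]$; (b) for every two vertices $x,y$ at distance $j$ ($j=1,\dots,D$), the number of assemblies containing $y$ at distance $j-1$ from $x$ equals $[j]$; (c) for every two vertices $x,y$ at distance $h$ ($h=0,1,\dots,D-1$), the subgraph induced on $B_h(x,y)=\Gamma_{h+1}(x)\cap\Gamma(y)$ is the $\alpha$-clique extension of a $(\frac{\beta}{\alpha}-[h])\times(r-[h])$-grid.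
   Context: Distance-regular graph with intersection numbers $b_i,c_i$, valency $k=b_0$; $\Gamma_i(x)$ is the set of vertices at distance $i$ from $x$, $\Gamma(y)=\Gamma_1(y)$. For integer $b\ne1$, $[j]=\frac{b^j-1}{b-1}$. Classical parameters $(D,b,\alpha,\beta)$: diameter $D$, $b_i=([D]-[i])(\beta-\alpha[i])$, $c_i=[i](1+\alpha[i-1])$. A Delsarte clique is a clique with $1+\frac{k}{-\theta_{\min}}$ vertices, $\theta_{\min}$ the smallest adjacency eigenvalue; geometric with respect to $\mathcal C$ means every edge lies in exactly one member of $\mathcal C$. An assembly is a maximal clique of $\Gamma$ not in $\mathcal C$. Distance from a vertex to a set $T$: $d(x,T)=\min_{y\in T}d(x,y)$. The $m\times n$-grid is $K_m\Box K_n$; the $s$-clique extension of $\Delta$ replaces each vertex by an $s$-clique, vertices in distinct cliques being adjacent iff the original vertices are adjacent. *)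

theory Defs
  imports Complex_Main
begin

definition simple_graph :: "'a set \<Rightarrow> ('a \<Rightarrow> 'a \<Rightarrow> bool) \<Rightarrow> bool" where
  "simple_graph V E \<longleftrightarrow> finite V \<and> (\<forall>x y. E x y \<longrightarrow> x \<in> V \<and> y \<in> V)
     \<and> (\<forall>x y. E x y \<longrightarrow> E y x) \<and> (\<forall>x. \<not> E x x)"

definition edge_rel :: "('a \<Rightarrow> 'a \<Rightarrow> bool) \<Rightarrow> ('a \<times> 'a) set" where
  "edge_rel E = {(u, v). E u v}"

definition connected_graph :: "'a set \<Rightarrow> ('a \<Rightarrow> 'a \<Rightarrow> bool) \<Rightarrow> bool" where
  "connected_graph V E \<longleftrightarrow> (\<forall>x\<in>V. \<forall>y\<in>V. (x, y) \<in> (edge_rel E)\<^sup>*)"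

definition gdist :: "('a \<Rightarrow> 'a \<Rightarrow> bool) \<Rightarrow> 'a \<Rightarrow> 'a \<Rightarrow> nat" where
  "gdist E x y = (LEAST n. (x, y) \<in> (edge_rel E) ^^ n)"

definition Gam :: "'a set \<Rightarrow> ('a \<Rightarrow> 'a \<Rightarrow> bool) \<Rightarrow> nat \<Rightarrow> 'a \<Rightarrow> 'a set" where
  "Gam V E i x = {y \<in> V. gdist E x y = i}"

definition diameter :: "'a set \<Rightarrow> ('a \<Rightarrow> 'a \<Rightarrow> bool) \<Rightarrow> nat" where
  "diameter V E = Max {gdist E x y | x y. x \<in> V \<and> y \<in> V}"

definition qnum :: "int \<Rightarrow> nat \<Rightarrow> real" where
  "qnum b j = (real_of_int b ^ j - 1) / (real_of_int b - 1)"

definition cl_b :: "nat \<Rightarrow> int \<Rightarrow> real \<Rightarrow> real \<Rightarrow> nat \<Rightarrow> real" where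
  "cl_b D b \<alpha> \<beta> i = (qnum b D - qnum b i) * (\<beta> - \<alpha> * qnum b i)"

definition cl_c :: "int \<Rightarrow> real \<Rightarrow> nat \<Rightarrow> real" where
  "cl_c b \<alpha> i = qnum b i * (1 + \<alpha> * qnum b (i - 1))"

definition drg_classical :: "'a set \<Rightarrow> ('a \<Rightarrow> 'a \<Rightarrow> bool) \<Rightarrow> nat \<Rightarrow> int \<Rightarrow> real \<Rightarrow> real \<Rightarrow> bool" where
  "drg_classical V E D b \<alpha> \<beta> \<longleftrightarrow> simple_graph V E \<and> V \<noteq> {} \<and> connected_graph V E
     \<and> b \<noteq> 1 \<and> diameter V E = D
     \<and> (\<forall>x\<in>V. \<forall>y\<in>V.
          (1 \<le> gdist E x y \<longrightarrow>
             real (card (Gam V E (gdist E x y - 1) x \<inter> Gam V E 1 y)) = cl_c b \<alpha> (gdist E x y))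
        \<and> (gdist E x y < D \<longrightarrow>
             real (card (Gam V E (gdist E x y + 1) x \<inter> Gam V E 1 y)) = cl_b D b \<alpha> \<beta> (gdist E x y)))"

definition adj_eigenvalues :: "'a set \<Rightarrow> ('a \<Rightarrow> 'a \<Rightarrow> bool) \<Rightarrow> real set" where
  "adj_eigenvalues V E = {\<theta>. \<exists>f :: 'a \<Rightarrow> real. (\<exists>x\<in>V. f x \<noteq> 0)
       \<and> (\<forall>x\<in>V. (\<Sum>y\<in>{y\<in>V. E x y}. f y) = \<theta> * f x)}"

definition theta_min :: "'a set \<Rightarrow> ('a \<Rightarrow> 'a \<Rightarrow> bool) \<Rightarrow> real" where
  "theta_min V E = Min (adj_eigenvalues V E)"

definition valency :: "'a set \<Rightarrow> ('a \<Rightarrow> 'a \<Rightarrow> bool) \<Rightarrow> nat" where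
  "valency V E = card {y \<in> V. E (SOME x. x \<in> V) y}"

definition is_clique :: "'a set \<Rightarrow> ('a \<Rightarrow> 'a \<Rightarrow> bool) \<Rightarrow> 'a set \<Rightarrow> bool" where
  "is_clique V E Q \<longleftrightarrow> Q \<subseteq> V \<and> (\<forall>x\<in>Q. \<forall>y\<in>Q. x \<noteq> y \<longrightarrow> E x y)"

definition max_clique :: "'a set \<Rightarrow> ('a \<Rightarrow> 'a \<Rightarrow> bool) \<Rightarrow> 'a set \<Rightarrow> bool" where
  "max_clique V E Q \<longleftrightarrow> is_clique V E Q \<and> (\<forall>Q'. is_clique V E Q' \<and> Q \<subseteq> Q' \<longrightarrow> Q' = Q)"

definition delsarte_clique :: "'a set \<Rightarrow> ('a \<Rightarrow> 'a \<Rightarrow> bool) \<Rightarrow> 'a set \<Rightarrow> bool" where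
  "delsarte_clique V E Q \<longleftrightarrow> is_clique V E Q \<and>
     real (card Q) = 1 + real (valency V E) / (- theta_min V E)"

definition geometric :: "'a set \<Rightarrow> ('a \<Rightarrow> 'a \<Rightarrow> bool) \<Rightarrow> 'a set set \<Rightarrow> bool" where
  "geometric V E \<C> \<longleftrightarrow> (\<forall>Q\<in>\<C>. delsarte_clique V E Q)
     \<and> (\<forall>x y. E x y \<longrightarrow> (\<exists>!Q. Q \<in> \<C> \<and> x \<in> Q \<and> y \<in> Q))"

definition assembly :: "'a set \<Rightarrow> ('a \<Rightarrow> 'a \<Rightarrow> bool) \<Rightarrow> 'a set set \<Rightarrow> 'a set \<Rightarrow> bool" where
  "assembly V E \<C> M \<longleftrightarrow> max_clique V E M \<and> M \<notin> \<C>"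

definition setdist :: "('a \<Rightarrow> 'a \<Rightarrow> bool) \<Rightarrow> 'a \<Rightarrow> 'a set \<Rightarrow> nat" where
  "setdist E x T = Min (gdist E x ` T)"

definition induced :: "('a \<Rightarrow> 'a \<Rightarrow> bool) \<Rightarrow> 'a set \<Rightarrow> 'a \<Rightarrow> 'a \<Rightarrow> bool" where
  "induced E S u v \<longleftrightarrow> u \<in> S \<and> v \<in> S \<and> E u v"

definition graph_iso :: "'a set \<Rightarrow> ('a \<Rightarrow> 'a \<Rightarrow> bool) \<Rightarrow> 'b set \<Rightarrow> ('b \<Rightarrow> 'b \<Rightarrow> bool) \<Rightarrow> bool" where
  "graph_iso V1 E1 V2 E2 \<longleftrightarrow> (\<exists>f. bij_betw f V1 V2 \<and> (\<forall>u\<in>V1. \<forall>v\<in>V1. E1 u v \<longleftrightarrow> E2 (f u) (f v)))"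

definition grid_V :: "nat \<Rightarrow> nat \<Rightarrow> (nat \<times> nat) set" where
  "grid_V m n = {..<m} \<times> {..<n}"

definition grid_E :: "nat \<Rightarrow> nat \<Rightarrow> nat \<times> nat \<Rightarrow> nat \<times> nat \<Rightarrow> bool" where
  "grid_E m n p q \<longleftrightarrow> p \<in> grid_V m n \<and> q \<in> grid_V m n \<and> p \<noteq> q
     \<and> (fst p = fst q \<or> snd p = snd q)"

definition cext_V :: "nat \<Rightarrow> 'b set \<Rightarrow> ('b \<times> nat) set" where
  "cext_V s W = W \<times> {..<s}"

definition cext_E :: "nat \<Rightarrow> 'b set \<Rightarrow> ('b \<Rightarrow> 'b \<Rightarrow> bool) \<Rightarrow> 'b \<times> nat \<Rightarrow> 'b \<times> nat \<Rightarrow> bool" where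
  "cext_E s W F p q \<longleftrightarrow> p \<in> cext_V s W \<and> q \<in> cext_V s W \<and> p \<noteq> q
     \<and> (fst p = fst q \<or> F (fst p) (fst q))"

definition is_cext_grid :: "'a set \<Rightarrow> ('a \<Rightarrow> 'a \<Rightarrow> bool) \<Rightarrow> nat \<Rightarrow> nat \<Rightarrow> nat \<Rightarrow> bool" where
  "is_cext_grid S E s m n \<longleftrightarrow>
     graph_iso S (induced E S) (cext_V s (grid_V m n)) (cext_E s (grid_V m n) (grid_E m n))"

end

theory Submission
  imports Defs "Jordan_Normal_Form.Char_Poly"
begin


lemma relpow_sym:
  assumes "\<And>u v. (u,v) \<in> R \<Longrightarrow> (v,u) \<in> R"
  shows "(x,y) \<in> R ^^ n \<Longrightarrow> (y,x) \<in> R ^^ n"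
proof (induction n arbitrary: y)
  case 0 then show ?case by simp
next
  case (Suc n)
  then obtain w where "(x,w) \<in> R ^^ n" "(w,y) \<in> R" by (blast elim: relpow_Suc_E)
  then show ?case using Suc.IH assms by (blast intro: relpow_Suc_I2)
qed

locale gr =
  fixes V :: "'a set" and E :: "'a \<Rightarrow> 'a \<Rightarrow> bool"
  assumes sg: "simple_graph V E" and cg: "connected_graph V E"
begin

lemma E_V: "E x y \<Longrightarrow> x \<in> V \<and> y \<in> V" using sg unfolding simple_graph_def by blast
lemma E_sym: "E x y \<Longrightarrow> E y x" using sg unfolding simple_graph_def by blast
lemma E_irr: "\<not> E x x" using sg unfolding simple_graph_def by blast
lemma V_fin: "finite V" using sg unfolding simple_graph_def by blast

lemma gd_path: "x \<in> V \<Longrightarrow> y \<in> V \<Longrightarrow> (x,y) \<in> (edge_rel E) ^^ (gdist E x y)"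
proof -
  assume "x \<in> V" "y \<in> V"
  then have "(x,y) \<in> (edge_rel E)\<^sup>*" using cg unfolding connected_graph_def by blast
  then obtain n where "(x,y) \<in> (edge_rel E) ^^ n" using rtrancl_power by blast
  then show ?thesis unfolding gdist_def by (rule LeastI)
qed

lemma gd_le: "(x,y) \<in> (edge_rel E) ^^ n \<Longrightarrow> gdist E x y \<le> n"
  unfolding gdist_def by (rule Least_le)

lemma gd_0[simp]: "gdist E x x = 0"
  using gd_le[of x x 0] by simp

lemma gd_eq0: "x \<in> V \<Longrightarrow> y \<in> V \<Longrightarrow> gdist E x y = 0 \<Longrightarrow> x = y"
  using gd_path[of x y] by simp

lemma gd_edge: "E x y \<Longrightarrow> gdist E x y = 1"
proof -
  assume e: "E x y"
  have "(x,y) \<in> (edge_rel E) ^^ 1" using e by (simp add: edge_rel_def)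
  then have "gdist E x y \<le> 1" by (rule gd_le)
  moreover have "gdist E x y \<noteq> 0" using gd_eq0[of x y] E_V[OF e] e E_irr by auto
  ultimately show ?thesis by simp
qed

lemma gd_1: "x \<in> V \<Longrightarrow> y \<in> V \<Longrightarrow> gdist E x y = 1 \<Longrightarrow> E x y"
  using gd_path[of x y] by (simp add: edge_rel_def)

lemma gd_sym: "x \<in> V \<Longrightarrow> y \<in> V \<Longrightarrow> gdist E x y = gdist E y x"
proof -
  have s: "(u,v) \<in> edge_rel E \<Longrightarrow> (v,u) \<in> edge_rel E" for u v
    using E_sym by (simp add: edge_rel_def)
  assume "x \<in> V" "y \<in> V"
  then have "gdist E y x \<le> gdist E x y" "gdist E x y \<le> gdist E y x"
    using gd_path[of x y] gd_path[of y x] relpow_sym[OF s] gd_le by blast+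
  then show ?thesis by simp
qed

lemma gd_tri: "x \<in> V \<Longrightarrow> E y z \<Longrightarrow> gdist E x z \<le> gdist E x y + 1"
proof -
  assume x: "x \<in> V" and e: "E y z"
  have "(x,y) \<in> (edge_rel E) ^^ gdist E x y" using gd_path x E_V[OF e] by blast
  then have "(x,z) \<in> (edge_rel E) ^^ Suc (gdist E x y)"
    using e by (auto intro: relpow_Suc_I simp: edge_rel_def)
  then show ?thesis using gd_le by fastforce
qed

lemma gd_tri2: "x \<in> V \<Longrightarrow> E y z \<Longrightarrow> gdist E x y \<le> gdist E x z + 1"
  using gd_tri E_sym by blast

lemma gd_pred: "x \<in> V \<Longrightarrow> y \<in> V \<Longrightarrow> gdist E x y = Suc h \<Longrightarrow> \<exists>z. E z y \<and> gdist E x z = h"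
proof -
  assume x: "x \<in> V" and y: "y \<in> V" and d: "gdist E x y = Suc h"
  have "(x,y) \<in> (edge_rel E) ^^ Suc h" using gd_path[OF x y] d by simp
  then obtain z where z1: "(x,z) \<in> (edge_rel E) ^^ h" and z2: "(z,y) \<in> edge_rel E"
    by (blast elim: relpow_Suc_E)
  have e: "E z y" using z2 by (simp add: edge_rel_def)
  have "gdist E x z \<le> h" using z1 gd_le by blast
  moreover have "gdist E x y \<le> gdist E x z + 1" using gd_tri[OF x e] .
  ultimately have "gdist E x z = h" using d by simp
  then show ?thesis using e by blast
qed

lemma Gam1: "y \<in> V \<Longrightarrow> u \<in> Gam V E 1 y \<longleftrightarrow> E y u"
  unfolding Gam_def using gd_1 gd_edge E_V by blast

end


locale drgl = gr V E for V :: "'a set" and E +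
  fixes C :: "'a set set" and D :: nat and al m r :: nat and q :: "nat \<Rightarrow> nat"
  assumes Vne: "V \<noteq> {}"
    and loc: "\<forall>x\<in>V. is_cext_grid (Gam V E 1 x) E al m r"
    and al1: "al \<ge> 1" and r2: "r \<ge> 2" and mr: "r < m"
    and geom: "geometric V E C"
    and diam: "\<forall>x\<in>V. \<forall>y\<in>V. gdist E x y \<le> D"
    and cc: "\<forall>x\<in>V. \<forall>y\<in>V. 1 \<le> gdist E x y \<longrightarrow>
       card (Gam V E (gdist E x y - 1) x \<inter> Gam V E 1 y) = q (gdist E x y) * (1 + al * q (gdist E x y - 1))"
    and bb: "\<forall>x\<in>V. \<forall>y\<in>V. gdist E x y < D \<longrightarrow>
       card (Gam V E (gdist E x y + 1) x \<inter> Gam V E 1 y) = al * (m - q (gdist E x y)) * (r - q (gdist E x y))"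
    and q0: "q 0 = 0" and qD: "q D = r" and qle: "\<forall>i<D. q i < r"
begin

abbreviation Nb where "Nb y \<equiv> Gam V E 1 y"

definition phi :: "'a \<Rightarrow> 'a \<Rightarrow> (nat \<times> nat) \<times> nat" where
  "phi y = (SOME f. bij_betw f (Nb y) (cext_V al (grid_V m r)) \<and>
     (\<forall>u\<in>Nb y. \<forall>v\<in>Nb y. induced E (Nb y) u v \<longleftrightarrow> cext_E al (grid_V m r) (grid_E m r) (f u) (f v)))"

definition N :: "bool \<Rightarrow> nat" where "N t = (if t then r else m)"

definition cd :: "'a \<Rightarrow> bool \<Rightarrow> 'a \<Rightarrow> nat" where
  "cd y t u = (if t then snd (fst (phi y u)) else fst (fst (phi y u)))"

definition Line :: "'a \<Rightarrow> bool \<Rightarrow> nat \<Rightarrow> 'a set" where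
  "Line y t c = insert y {u \<in> Nb y. cd y t u = c}"

lemma phi_prop: assumes "y \<in> V"
  shows "bij_betw (phi y) (Nb y) (cext_V al (grid_V m r)) \<and>
     (\<forall>u\<in>Nb y. \<forall>v\<in>Nb y. induced E (Nb y) u v \<longleftrightarrow> cext_E al (grid_V m r) (grid_E m r) (phi y u) (phi y v))"
proof -
  have "is_cext_grid (Nb y) E al m r" using loc assms by blast
  then have "\<exists>f. bij_betw f (Nb y) (cext_V al (grid_V m r)) \<and>
     (\<forall>u\<in>Nb y. \<forall>v\<in>Nb y. induced E (Nb y) u v \<longleftrightarrow> cext_E al (grid_V m r) (grid_E m r) (f u) (f v))"
    unfolding is_cext_grid_def graph_iso_def by blast
  then show ?thesis unfolding phi_def by (rule someI_ex)
qed

lemma phi_bij: "y \<in> V \<Longrightarrow> bij_betw (phi y) (Nb y) (cext_V al (grid_V m r))"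
  using phi_prop by blast

lemma phi_inj: "y \<in> V \<Longrightarrow> inj_on (phi y) (Nb y)"
  using phi_bij bij_betw_imp_inj_on by blast

lemma phi_img: "y \<in> V \<Longrightarrow> phi y ` Nb y = ({..<m} \<times> {..<r}) \<times> {..<al}"
  using phi_bij bij_betw_imp_surj_on unfolding cext_V_def grid_V_def by blast

lemma phi_range: "y \<in> V \<Longrightarrow> u \<in> Nb y \<Longrightarrow> phi y u \<in> ({..<m} \<times> {..<r}) \<times> {..<al}"
  using phi_img by blast

lemma cd_range: "y \<in> V \<Longrightarrow> u \<in> Nb y \<Longrightarrow> cd y t u < N t"
  using phi_range[of y u] unfolding cd_def N_def by (auto simp: mem_Times_iff)

lemma Nb_V: "Nb y \<subseteq> V" unfolding Gam_def by blast

lemma Nb_fin: "finite (Nb y)" using V_fin Nb_V finite_subset by blast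

lemma notin_Nb: "y \<notin> Nb y" unfolding Gam_def by simp

lemma cextE_iff: assumes "p \<in> ({..<m} \<times> {..<r}) \<times> {..<al}" "p' \<in> ({..<m} \<times> {..<r}) \<times> {..<al}"
  shows "cext_E al (grid_V m r) (grid_E m r) p p' \<longleftrightarrow> p \<noteq> p' \<and> (fst (fst p) = fst (fst p') \<or> snd (fst p) = snd (fst p'))"
proof -
  obtain a b s where p: "p = ((a,b),s)" by (metis prod.collapse)
  obtain a' b' s' where p': "p' = ((a',b'),s')" by (metis prod.collapse)
  show ?thesis using assms unfolding p p' cext_E_def cext_V_def grid_E_def grid_V_def by auto
qed

lemma phi_adj: assumes y: "y \<in> V" and u: "u \<in> Nb y" and v: "v \<in> Nb y"
  shows "E u v \<longleftrightarrow> (u \<noteq> v \<and> (cd y False u = cd y False v \<or> cd y True u = cd y True v))"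
proof -
  have i: "induced E (Nb y) u v \<longleftrightarrow> E u v" using u v unfolding induced_def by blast
  have "E u v \<longleftrightarrow> cext_E al (grid_V m r) (grid_E m r) (phi y u) (phi y v)"
    using phi_prop[OF y] u v i by blast
  also have "\<dots> \<longleftrightarrow> (phi y u \<noteq> phi y v \<and> (cd y False u = cd y False v \<or> cd y True u = cd y True v))"
    using cextE_iff[OF phi_range[OF y u] phi_range[OF y v]] unfolding cd_def by simp
  also have "phi y u \<noteq> phi y v \<longleftrightarrow> u \<noteq> v" using phi_inj[OF y] u v inj_on_eq_iff by metis
  finally show ?thesis .
qed

lemma phi_split: "\<exists>a b s. phi y u = ((a,b),s) \<and> cd y False u = a \<and> cd y True u = b"
  unfolding cd_def by (metis fst_conv prod.collapse snd_conv)

lemma card_XY: assumes y: "y \<in> V" and X: "X \<subseteq> {..<m}" and Y: "Y \<subseteq> {..<r}"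
  shows "card {u \<in> Nb y. cd y False u \<in> X \<and> cd y True u \<in> Y} = al * card X * card Y"
proof -
  let ?S = "{u \<in> Nb y. cd y False u \<in> X \<and> cd y True u \<in> Y}"
  have "phi y ` ?S = (X \<times> Y) \<times> {..<al}"
  proof
    show "phi y ` ?S \<subseteq> (X \<times> Y) \<times> {..<al}"
    proof
      fix z assume "z \<in> phi y ` ?S"
      then obtain u where u: "u \<in> ?S" "z = phi y u" by blast
      have r: "phi y u \<in> ({..<m} \<times> {..<r}) \<times> {..<al}" using phi_range[OF y] u by blast
      obtain a b s where ab: "phi y u = ((a,b),s)" "cd y False u = a" "cd y True u = b"
        using phi_split by blast
      show "z \<in> (X \<times> Y) \<times> {..<al}" using u r ab by simp
    qed
  next
    show "(X \<times> Y) \<times> {..<al} \<subseteq> phi y ` ?S"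
    proof
      fix z assume z: "z \<in> (X \<times> Y) \<times> {..<al}"
      then have "z \<in> ({..<m} \<times> {..<r}) \<times> {..<al}" using X Y by (auto simp: mem_Times_iff)
      then have "z \<in> phi y ` Nb y" using phi_img[OF y] by simp
      then obtain u where u: "u \<in> Nb y" "z = phi y u" by blast
      obtain a b s where ab: "phi y u = ((a,b),s)" "cd y False u = a" "cd y True u = b"
        using phi_split by blast
      have "u \<in> ?S" using u z ab by simp
      then show "z \<in> phi y ` ?S" using u by blast
    qed
  qed
  moreover have "inj_on (phi y) ?S" by (rule inj_on_subset[OF phi_inj[OF y]]) blast
  ultimately have "card ?S = card ((X \<times> Y) \<times> {..<al})" using card_image by (metis (no_types, lifting))
  also have "\<dots> = card X * card Y * al" by (simp add: card_cartesian_product)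
  finally show ?thesis by simp
qed

lemma N_not: "N (\<not> t) = (if t then m else r)" unfolding N_def by simp

lemma card_gen: assumes y: "y \<in> V" and X: "X \<subseteq> {..<N t}" and Y: "Y \<subseteq> {..<N (\<not> t)}"
  shows "card {u \<in> Nb y. cd y t u \<in> X \<and> cd y (\<not> t) u \<in> Y} = al * card X * card Y"
proof (cases t)
  case True
  then have "{u \<in> Nb y. cd y t u \<in> X \<and> cd y (\<not> t) u \<in> Y} = {u \<in> Nb y. cd y False u \<in> Y \<and> cd y True u \<in> X}"
    by auto
  then show ?thesis using card_XY[OF y, of Y X] X Y True unfolding N_def by simp
next
  case False
  then show ?thesis using card_XY[OF y, of X Y] X Y unfolding N_def by simp
qed

lemma exists_pt: assumes y: "y \<in> V" and "c < N t" and "d < N (\<not> t)"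
  shows "\<exists>u \<in> Nb y. cd y t u = c \<and> cd y (\<not> t) u = d"
proof -
  have "card {u \<in> Nb y. cd y t u \<in> {c} \<and> cd y (\<not> t) u \<in> {d}} = al"
    using card_gen[OF y, of "{c}" t "{d}"] assms by simp
  then have "{u \<in> Nb y. cd y t u \<in> {c} \<and> cd y (\<not> t) u \<in> {d}} \<noteq> {}" using al1 by (metis card.empty not_one_le_zero)
  then show ?thesis by blast
qed

lemma Line_V: "y \<in> V \<Longrightarrow> Line y t c \<subseteq> V" unfolding Line_def using Nb_V by auto

lemma Line_fin: "finite (Line y t c)" unfolding Line_def using Nb_fin by auto

lemma Line_card: assumes y: "y \<in> V" and c: "c < N t"
  shows "card (Line y t c) = 1 + al * N (\<not> t)"
proof -
  have "{u \<in> Nb y. cd y t u = c} = {u \<in> Nb y. cd y t u \<in> {c} \<and> cd y (\<not> t) u \<in> {..<N (\<not> t)}}"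
    using cd_range[OF y] by auto
  then have "card {u \<in> Nb y. cd y t u = c} = al * N (\<not> t)"
    using card_gen[OF y, of "{c}" t "{..<N (\<not> t)}"] c by simp
  then show ?thesis unfolding Line_def using Nb_fin notin_Nb by simp
qed

lemma Line_clique: assumes y: "y \<in> V" shows "is_clique V E (Line y t c)"
  unfolding is_clique_def
proof (intro conjI ballI impI)
  show "Line y t c \<subseteq> V" using Line_V[OF y] .
next
  fix u v assume u: "u \<in> Line y t c" and v: "v \<in> Line y t c" and uv: "u \<noteq> v"
  show "E u v"
  proof (cases "u = y")
    case True then show ?thesis using v uv Gam1[OF y] unfolding Line_def by auto
  next
    case False
    note uF = False
    show ?thesis
    proof (cases "v = y")
      case True then show ?thesis using u uF Gam1[OF y] E_sym unfolding Line_def by auto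
    next
      case False
      then have "u \<in> Nb y" "v \<in> Nb y" "cd y t u = cd y t v" using u v uF unfolding Line_def by auto
      then show ?thesis using phi_adj[OF y] uv by (cases t) auto
    qed
  qed
qed

lemma N_ge2: "N t \<ge> 2" using r2 mr unfolding N_def by auto

lemma Line_mem: "w \<in> Line y t c \<longleftrightarrow> w = y \<or> (w \<in> Nb y \<and> cd y t w = c)"
  unfolding Line_def by blast

lemma clique_in_line: assumes y: "y \<in> V" and K: "is_clique V E K" and yK: "y \<in> K"
  shows "\<exists>t c. c < N t \<and> K \<subseteq> Line y t c"
proof -
  have KN: "K - {y} \<subseteq> Nb y"
  proof
    fix u assume u: "u \<in> K - {y}"
    have cl: "\<forall>a\<in>K. \<forall>b\<in>K. a \<noteq> b \<longrightarrow> E a b" using K unfolding is_clique_def by simp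
    have "E y u" using cl u yK by (metis DiffE singletonI)
    then show "u \<in> Nb y" using Gam1[OF y] by blast
  qed
  have adj: "cd y False u = cd y False v \<or> cd y True u = cd y True v"
    if u: "u \<in> K - {y}" and v: "v \<in> K - {y}" and uv: "u \<noteq> v" for u v
  proof -
    have e: "E u v" using K u v uv unfolding is_clique_def by blast
    have "u \<in> Nb y" "v \<in> Nb y" using KN u v by blast+
    from phi_adj[OF y this] e show ?thesis by blast
  qed
  show ?thesis
  proof (cases "\<exists>u\<in>K-{y}. \<exists>v\<in>K-{y}. cd y False u \<noteq> cd y False v")
    case True
    then obtain u v where uv: "u \<in> K - {y}" "v \<in> K - {y}" "cd y False u \<noteq> cd y False v" by blast
    then have "u \<noteq> v" by auto
    then have eq: "cd y True u = cd y True v" using adj[OF uv(1) uv(2)] uv(3) by blast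
    have all: "cd y True w = cd y True u" if w: "w \<in> K - {y}" for w
    proof (rule ccontr)
      assume ne: "cd y True w \<noteq> cd y True u"
      then have "w \<noteq> u" "w \<noteq> v" using eq by auto
      then have "cd y False w = cd y False u" "cd y False w = cd y False v"
        using adj[OF w uv(1)] adj[OF w uv(2)] ne eq by auto
      then show False using uv(3) by simp
    qed
    have "K \<subseteq> Line y True (cd y True u)"
    proof
      fix w assume w: "w \<in> K"
      show "w \<in> Line y True (cd y True u)"
      proof (cases "w = y")
        case True then show ?thesis unfolding Line_mem by blast
      next
        case False
        then have w': "w \<in> K - {y}" using w by blast
        have "cd y True w = cd y True u" using all[OF w'] .
        moreover have "w \<in> Nb y" using KN w' by blast
        ultimately show ?thesis unfolding Line_mem by simp
      qed
    qed
    moreover have "cd y True u < N True" using cd_range[OF y] KN uv(1) by blast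
    ultimately show ?thesis by (intro exI[of _ True] exI[of _ "cd y True u"]) simp
  next
    case nex: False
    show ?thesis
    proof (cases "K - {y} = {}")
      case True
      then have "K \<subseteq> Line y False 0" by (auto simp: Line_mem)
      moreover have "0 < N False" using N_ge2[of False] by simp
      ultimately show ?thesis by (intro exI[of _ False] exI[of _ 0]) simp
    next
      case ne: False
      then obtain u where u: "u \<in> K - {y}" by blast
      have "K \<subseteq> Line y False (cd y False u)"
      proof
        fix w assume w: "w \<in> K"
        show "w \<in> Line y False (cd y False u)"
        proof (cases "w = y")
          case True then show ?thesis unfolding Line_mem by blast
        next
          case wy: False
          then have w': "w \<in> K - {y}" using w by blast
          have nn: "\<forall>a\<in>K-{y}. \<forall>b\<in>K-{y}. cd y False a = cd y False b" using nex by blast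
          have "cd y False w = cd y False u" using nn w' u by blast
          moreover have "w \<in> Nb y" using KN w' by blast
          ultimately show ?thesis unfolding Line_mem by simp
        qed
      qed
      moreover have "cd y False u < N False" using cd_range[OF y] KN u by blast
      ultimately show ?thesis by (intro exI[of _ False] exI[of _ "cd y False u"]) simp
    qed
  qed
qed

lemma Line_max: assumes y: "y \<in> V" and c: "c < N t" shows "max_clique V E (Line y t c)"
  unfolding max_clique_def
proof (intro conjI allI impI)
  show "is_clique V E (Line y t c)" by (rule Line_clique[OF y])
next
  fix K assume K: "is_clique V E K \<and> Line y t c \<subseteq> K"
  then have yK: "y \<in> K" unfolding Line_def by auto
  obtain t' c' where tc: "c' < N t'" "K \<subseteq> Line y t' c'" using clique_in_line[OF y _ yK] K by blast
  have sub: "Line y t c \<subseteq> Line y t' c'" using K tc by blast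
  have tt: "t' = t"
  proof (rule ccontr)
    assume "t' \<noteq> t"
    then have t': "t' = (\<not> t)" by auto
    define d where "d = (if c' = 0 then 1 else (0::nat))"
    have d: "d < N (\<not> t)" "d \<noteq> c'" using N_ge2[of "\<not> t"] unfolding d_def by auto
    obtain u where u: "u \<in> Nb y" "cd y t u = c" "cd y (\<not> t) u = d" using exists_pt[OF y c d(1)] by blast
    then have "u \<in> Line y t c" unfolding Line_def by auto
    then have "u \<in> Line y t' c'" using sub by blast
    then show False using u d t' notin_Nb unfolding Line_def by auto
  qed
  have cc': "c' = c"
  proof -
    obtain u where u: "u \<in> Nb y" "cd y t u = c" using exists_pt[OF y c, of 0] N_ge2[of "\<not> t"] by auto
    then have "u \<in> Line y t' c'" using sub unfolding Line_def by auto
    then show ?thesis using u tt notin_Nb unfolding Line_def by auto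
  qed
  show "K = Line y t c" using tc K tt cc' by blast
qed

lemma maxclique_char: assumes y: "y \<in> V" and K: "max_clique V E K" and yK: "y \<in> K"
  shows "\<exists>t c. c < N t \<and> K = Line y t c"
proof -
  obtain t c where tc: "c < N t" "K \<subseteq> Line y t c"
    using clique_in_line[OF y _ yK] K unfolding max_clique_def by blast
  then have "K = Line y t c" using K Line_clique[OF y] unfolding max_clique_def by blast
  then show ?thesis using tc by blast
qed

lemma in_Line_V: "y \<in> V \<Longrightarrow> w \<in> Line y t c \<Longrightarrow> w \<in> V" using Line_V by blast

lemma Line_transfer: assumes y: "y \<in> V" and c: "c < N t" and w: "w \<in> Line y t c"
  shows "\<exists>c'. c' < N t \<and> Line y t c = Line w t c'"
proof -
  have wV: "w \<in> V" using in_Line_V[OF y w] .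
  obtain t' c' where tc: "c' < N t'" "Line y t c = Line w t' c'"
    using maxclique_char[OF wV Line_max[OF y c] w] by blast
  have "card (Line y t c) = card (Line w t' c')" using tc by simp
  then have "1 + al * N (\<not> t) = 1 + al * N (\<not> t')" using Line_card[OF y c] Line_card[OF wV tc(1)] by simp
  then have "N (\<not> t) = N (\<not> t')" using al1 by simp
  then have "t' = t" using mr unfolding N_def by (cases t; cases t') auto
  then show ?thesis using tc by blast
qed

lemma Line_inj: assumes y: "y \<in> V" and c: "c < N t" and c': "c' < N t" and eq: "Line y t c = Line y t c'"
  shows "c = c'"
proof -
  obtain u where u: "u \<in> Nb y" "cd y t u = c" using exists_pt[OF y c, of 0] N_ge2[of "\<not> t"] by auto
  then have "u \<in> Line y t c'" using eq unfolding Line_def by auto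
  then show ?thesis using u notin_Nb unfolding Line_def by auto
qed

end


context gr begin

lemma eig_finite: "finite (adj_eigenvalues V E)"
proof -
  define n where "n = card V"
  obtain e where e: "bij_betw e {0..<n} V" using ex_bij_betw_nat_finite[OF V_fin] unfolding n_def by blast
  define A :: "real mat" where "A = mat n n (\<lambda>(i,j). if E (e i) (e j) then 1 else 0)"
  have A: "A \<in> carrier_mat n n" unfolding A_def by simp
  have sub: "adj_eigenvalues V E \<subseteq> {k. poly (char_poly A) k = 0}"
  proof
    fix th assume "th \<in> adj_eigenvalues V E"
    then obtain f :: "'a \<Rightarrow> real" where f1: "\<exists>x\<in>V. f x \<noteq> 0"
      and f2: "\<forall>x\<in>V. (\<Sum>y\<in>{y\<in>V. E x y}. f y) = th * f x"
      unfolding adj_eigenvalues_def by blast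
    define v where "v = vec n (\<lambda>i. f (e i))"
    have "eigenvector A v th"
      unfolding eigenvector_def
    proof (intro conjI)
      show "v \<in> carrier_vec (dim_row A)" unfolding v_def A_def by simp
    next
      obtain x where x: "x \<in> V" "f x \<noteq> 0" using f1 by blast
      then obtain i where i: "i < n" "e i = x" using e unfolding bij_betw_def by auto
      have "v $ i \<noteq> 0" using i x unfolding v_def by simp
      moreover have "0\<^sub>v (dim_row A) $ i = 0" using i unfolding A_def by simp
      ultimately show "v \<noteq> 0\<^sub>v (dim_row A)" by metis
    next
      show "A *\<^sub>v v = th \<cdot>\<^sub>v v"
      proof (rule eq_vecI)
        fix i assume "i < dim_vec (th \<cdot>\<^sub>v v)"
        then have i: "i < n" unfolding v_def by simp
        have eiV: "e i \<in> V" using e i unfolding bij_betw_def by auto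
        have "(A *\<^sub>v v) $ i = (\<Sum>j\<in>{0..<n}. (if E (e i) (e j) then 1 else 0) * f (e j))"
          using i unfolding A_def v_def by (simp add: scalar_prod_def)
        also have "\<dots> = (\<Sum>j\<in>{0..<n}. if E (e i) (e j) then f (e j) else 0)"
          by (rule sum.cong) auto
        also have "\<dots> = (\<Sum>y\<in>V. if E (e i) y then f y else 0)"
          using sum.reindex_bij_betw[OF e, of "\<lambda>y. if E (e i) y then f y else 0"] by simp
        also have "\<dots> = (\<Sum>y\<in>{y\<in>V. E (e i) y}. f y)"
          using sum.inter_filter[OF V_fin, of f "\<lambda>y. E (e i) y"] by simp
        also have "\<dots> = th * f (e i)" using f2 eiV by blast
        also have "\<dots> = (th \<cdot>\<^sub>v v) $ i" using i unfolding v_def by simp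
        finally show "(A *\<^sub>v v) $ i = (th \<cdot>\<^sub>v v) $ i" .
      next
        show "dim_vec (A *\<^sub>v v) = dim_vec (th \<cdot>\<^sub>v v)" unfolding A_def v_def by simp
      qed
    qed
    then have "eigenvalue A th" unfolding eigenvalue_def by blast
    then show "th \<in> {k. poly (char_poly A) k = 0}" using eigenvalue_root_char_poly[OF A] by simp
  qed
  have "char_poly A \<noteq> 0" using degree_monic_char_poly[OF A] by auto
  then have "finite {k. poly (char_poly A) k = 0}" by (rule poly_roots_finite)
  then show ?thesis using sub finite_subset by blast
qed

end

context drgl begin

lemma Nb_card: assumes y: "y \<in> V" shows "card (Nb y) = al * m * r"
proof -
  have "cd y False u < m \<and> cd y True u < r" if u: "u \<in> Nb y" for u
    using cd_range[OF y u, of False] cd_range[OF y u, of True] unfolding N_def by simp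
  then have "Nb y = {u \<in> Nb y. cd y False u \<in> {..<m} \<and> cd y True u \<in> {..<r}}"
    by auto
  then show ?thesis using card_XY[OF y, of "{..<m}" "{..<r}"] by simp
qed

lemma nbset: "x \<in> V \<Longrightarrow> {y \<in> V. E x y} = Nb x"
  using Gam1 E_V by blast

lemma valency_eq: "valency V E = al * m * r"
proof -
  have x0: "(SOME x. x \<in> V) \<in> V" using Vne by (simp add: some_in_eq)
  show ?thesis unfolding valency_def using nbset[OF x0] Nb_card[OF x0] by simp
qed

lemma kpos: "al * m * r > 0" using al1 mr r2 by simp

lemma eig_ne: "adj_eigenvalues V E \<noteq> {}"
proof -
  have "real (al * m * r) \<in> adj_eigenvalues V E"
    unfolding adj_eigenvalues_def
  proof (intro CollectI exI[of _ "\<lambda>_. 1"] conjI)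
    show "\<exists>x\<in>V. (1::real) \<noteq> 0" using Vne by auto
    show "\<forall>x\<in>V. (\<Sum>y\<in>{y \<in> V. E x y}. (1::real)) = real (al * m * r) * 1"
      using nbset Nb_card by simp
  qed
  then show ?thesis by blast
qed

definition FL where "FL = {L. \<exists>y\<in>V. \<exists>c<r. L = Line y True c}"

lemma FL_fin: "finite FL"
proof -
  have "FL \<subseteq> Pow V" unfolding FL_def using Line_V by blast
  then show ?thesis using V_fin finite_subset by (metis finite_Pow_iff)
qed

lemma cnt_self: assumes u: "u \<in> V" shows "card {L \<in> FL. u \<in> L \<and> u \<in> L} = r"
proof -
  have "{L \<in> FL. u \<in> L \<and> u \<in> L} = (\<lambda>c. Line u True c) ` {..<r}"
  proof
    show "{L \<in> FL. u \<in> L \<and> u \<in> L} \<subseteq> (\<lambda>c. Line u True c) ` {..<r}"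
    proof
      fix L assume L: "L \<in> {L \<in> FL. u \<in> L \<and> u \<in> L}"
      then obtain y c where yc: "y \<in> V" "c < r" "L = Line y True c" "u \<in> L" unfolding FL_def by blast
      then obtain c' where "c' < N True" "Line y True c = Line u True c'"
        using Line_transfer[OF yc(1), of c True u] unfolding N_def by auto
      then show "L \<in> (\<lambda>c. Line u True c) ` {..<r}" using yc unfolding N_def by auto
    qed
  next
    show "(\<lambda>c. Line u True c) ` {..<r} \<subseteq> {L \<in> FL. u \<in> L \<and> u \<in> L}"
      unfolding FL_def Line_def using u by blast
  qed
  moreover have "inj_on (\<lambda>c. Line u True c) {..<r}"
    using Line_inj[OF u, of _ True] unfolding inj_on_def N_def by auto
  ultimately show ?thesis by (simp add: card_image)
qed

lemma cnt_adj: assumes u: "u \<in> V" and e: "E u v" shows "card {L \<in> FL. u \<in> L \<and> v \<in> L} = 1"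
proof -
  have vN: "v \<in> Nb u" using Gam1[OF u] e by blast
  have uv: "u \<noteq> v" using e E_irr by auto
  have "{L \<in> FL. u \<in> L \<and> v \<in> L} = {Line u True (cd u True v)}"
  proof
    show "{L \<in> FL. u \<in> L \<and> v \<in> L} \<subseteq> {Line u True (cd u True v)}"
    proof
      fix L assume L: "L \<in> {L \<in> FL. u \<in> L \<and> v \<in> L}"
      then obtain y c where yc: "y \<in> V" "c < r" "L = Line y True c" "u \<in> L" "v \<in> L" unfolding FL_def by blast
      then obtain c' where c': "c' < N True" "Line y True c = Line u True c'"
        using Line_transfer[OF yc(1), of c True u] unfolding N_def by auto
      then have "v \<in> Line u True c'" using yc by simp
      then have "cd u True v = c'" using uv unfolding Line_mem by auto
      then show "L \<in> {Line u True (cd u True v)}" using yc c' by simp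
    qed
  next
    have "cd u True v < r" using cd_range[OF u vN, of True] unfolding N_def by simp
    moreover have "v \<in> Line u True (cd u True v)" using vN unfolding Line_mem by simp
    moreover have "u \<in> Line u True (cd u True v)" unfolding Line_mem by simp
    ultimately show "{Line u True (cd u True v)} \<subseteq> {L \<in> FL. u \<in> L \<and> v \<in> L}"
      unfolding FL_def using u by blast
  qed
  then show ?thesis by simp
qed

lemma cnt_non: assumes u: "u \<in> V" and uv: "u \<noteq> v" and ne: "\<not> E u v"
  shows "card {L \<in> FL. u \<in> L \<and> v \<in> L} = 0"
proof -
  have "{L \<in> FL. u \<in> L \<and> v \<in> L} = {}"
  proof (rule ccontr)
    assume "{L \<in> FL. u \<in> L \<and> v \<in> L} \<noteq> {}"
    then obtain L where L: "L \<in> FL" "u \<in> L" "v \<in> L" by blast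
    then obtain y c where yc: "y \<in> V" "L = Line y True c" unfolding FL_def by blast
    have "is_clique V E L" using Line_clique[OF yc(1)] yc by simp
    then have "E u v" using L uv unfolding is_clique_def by blast
    then show False using ne by simp
  qed
  then show ?thesis by (metis card.empty)
qed

lemma cnt_sum: assumes u: "u \<in> V"
  shows "(\<Sum>v\<in>V. f v * real (card {L \<in> FL. u \<in> L \<and> v \<in> L})) = real r * f u + (\<Sum>v\<in>{v\<in>V. E u v}. f v)"
proof -
  have "(\<Sum>v\<in>V. f v * real (card {L \<in> FL. u \<in> L \<and> v \<in> L}))
      = (\<Sum>v\<in>V. (if v = u then real r * f u else 0) + (if E u v then f v else 0))"
  proof (rule sum.cong)
    fix v assume v: "v \<in> V"
    show "f v * real (card {L \<in> FL. u \<in> L \<and> v \<in> L}) = (if v = u then real r * f u else 0) + (if E u v then f v else 0)"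
    proof (cases "v = u")
      case True then show ?thesis using cnt_self[OF u] E_irr by simp
    next
      case vu: False
      show ?thesis
      proof (cases "E u v")
        case True then show ?thesis using cnt_adj[OF u] vu by simp
      next
        case ne: False
        have "u \<noteq> v" using vu by auto
        then show ?thesis using cnt_non[OF u _ ne] vu ne by simp
      qed
    qed
  qed simp
  also have "\<dots> = (\<Sum>v\<in>V. (if v = u then real r * f u else 0)) + (\<Sum>v\<in>V. (if E u v then f v else 0))"
    by (rule sum.distrib)
  also have "(\<Sum>v\<in>V. (if v = u then real r * f u else 0)) = real r * f u"
    using u V_fin by (simp add: sum.delta')
  also have "(\<Sum>v\<in>V. (if E u v then f v else 0)) = (\<Sum>v\<in>{v\<in>V. E u v}. f v)"
    using sum.inter_filter[OF V_fin, of f "\<lambda>v. E u v"] by simp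
  finally show ?thesis .
qed

lemma eig_lb: assumes th: "th \<in> adj_eigenvalues V E" shows "th \<ge> - real r"
proof -
  obtain f :: "'a \<Rightarrow> real" where f1: "\<exists>x\<in>V. f x \<noteq> 0"
    and f2: "\<forall>x\<in>V. (\<Sum>y\<in>{y\<in>V. E x y}. f y) = th * f x"
    using th unfolding adj_eigenvalues_def by blast
  have LV: "L \<in> FL \<Longrightarrow> L \<subseteq> V" for L unfolding FL_def using Line_V by blast
  have sq: "(\<Sum>u\<in>L. f u)^2 = (\<Sum>u\<in>V. \<Sum>v\<in>V. if u \<in> L \<and> v \<in> L then f u * f v else 0)" if L: "L \<in> FL" for L
  proof -
    have VL: "{x \<in> V. x \<in> L} = L" using LV[OF L] by blast
    have "(\<Sum>u\<in>L. f u)^2 = (\<Sum>u\<in>L. \<Sum>v\<in>L. f u * f v)"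
      by (simp add: power2_eq_square sum_product)
    also have "\<dots> = (\<Sum>u\<in>V. if u \<in> L then (\<Sum>v\<in>L. f u * f v) else 0)"
      using sum.inter_filter[OF V_fin, of "\<lambda>u. \<Sum>v\<in>L. f u * f v" "\<lambda>u. u \<in> L"] VL by simp
    also have "\<dots> = (\<Sum>u\<in>V. \<Sum>v\<in>V. if u \<in> L \<and> v \<in> L then f u * f v else 0)"
    proof (rule sum.cong)
      fix u assume "u \<in> V"
      have "(\<Sum>v\<in>L. f u * f v) = (\<Sum>v\<in>V. if v \<in> L then f u * f v else 0)"
        using sum.inter_filter[OF V_fin, of "\<lambda>v. f u * f v" "\<lambda>v. v \<in> L"] VL by simp
      then show "(if u \<in> L then (\<Sum>v\<in>L. f u * f v) else 0) = (\<Sum>v\<in>V. if u \<in> L \<and> v \<in> L then f u * f v else 0)"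
        by (auto intro: sum.cong)
    qed simp
    finally show ?thesis .
  qed
  have "0 \<le> (\<Sum>L\<in>FL. (\<Sum>u\<in>L. f u)^2)" by (simp add: sum_nonneg)
  also have "\<dots> = (\<Sum>L\<in>FL. \<Sum>u\<in>V. \<Sum>v\<in>V. if u \<in> L \<and> v \<in> L then f u * f v else 0)"
    using sq by (rule sum.cong[OF refl])
  also have "\<dots> = (\<Sum>u\<in>V. \<Sum>v\<in>V. \<Sum>L\<in>FL. if u \<in> L \<and> v \<in> L then f u * f v else 0)"
    by (simp add: sum.swap[of _ FL V] sum.swap[of _ FL V])
  also have "\<dots> = (\<Sum>u\<in>V. \<Sum>v\<in>V. f u * (f v * real (card {L \<in> FL. u \<in> L \<and> v \<in> L})))"
  proof (intro sum.cong refl)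
    fix u v
    have "(\<Sum>L\<in>FL. if u \<in> L \<and> v \<in> L then f u * f v else 0) = (\<Sum>L\<in>{L \<in> FL. u \<in> L \<and> v \<in> L}. f u * f v)"
      using sum.inter_filter[OF FL_fin, of "\<lambda>_. f u * f v" "\<lambda>L. u \<in> L \<and> v \<in> L"] by simp
    also have "\<dots> = f u * (f v * real (card {L \<in> FL. u \<in> L \<and> v \<in> L}))" by simp
    finally show "(\<Sum>L\<in>FL. if u \<in> L \<and> v \<in> L then f u * f v else 0) = f u * (f v * real (card {L \<in> FL. u \<in> L \<and> v \<in> L}))" .
  qed
  also have "\<dots> = (\<Sum>u\<in>V. f u * (\<Sum>v\<in>V. f v * real (card {L \<in> FL. u \<in> L \<and> v \<in> L})))"
    by (simp add: sum_distrib_left)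
  also have "\<dots> = (\<Sum>u\<in>V. f u * (real r * f u + th * f u))"
    using cnt_sum f2 by (intro sum.cong refl) simp
  also have "\<dots> = (real r + th) * (\<Sum>u\<in>V. (f u)^2)"
    by (simp add: sum_distrib_left algebra_simps power2_eq_square)
  finally have nn: "0 \<le> (real r + th) * (\<Sum>u\<in>V. (f u)^2)" .
  obtain x where x: "x \<in> V" "f x \<noteq> 0" using f1 by blast
  have "(f x)^2 \<le> (\<Sum>u\<in>V. (f u)^2)"
    using member_le_sum[of x V "\<lambda>u. (f u)^2"] x V_fin by simp
  moreover have "(f x)^2 > 0" using x by simp
  ultimately have "(\<Sum>u\<in>V. (f u)^2) > 0" by linarith
  then have "real r + th \<ge> 0" using nn by (simp add: zero_le_mult_iff)
  then show ?thesis by simp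
qed

end


context drgl begin

lemma C_card_lb: assumes Q: "Q \<in> C" shows "real (card Q) \<ge> 1 + real (al * m)"
proof -
  define th where "th = theta_min V E"
  have thin: "th \<in> adj_eigenvalues V E" unfolding th_def theta_min_def using eig_finite eig_ne by (rule Min_in)
  have thr: "th \<ge> - real r" using eig_lb[OF thin] .
  have dc: "real (card Q') = 1 + real (al * m * r) / (- th)" if "Q' \<in> C" for Q'
    using geom that valency_eq unfolding geometric_def delsarte_clique_def th_def by auto
  obtain x where x: "x \<in> V" using Vne by blast
  have "card (Nb x) > 0" using Nb_card[OF x] kpos by simp
  then obtain u where u: "u \<in> Nb x" by (metis card.empty less_irrefl ex_in_conv)
  have e: "E x u" using Gam1[OF x] u by blast
  obtain Q0 where Q0: "Q0 \<in> C" "x \<in> Q0" "u \<in> Q0" using geom e unfolding geometric_def by blast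
  have "Q0 \<subseteq> V" using geom Q0(1) unfolding geometric_def delsarte_clique_def is_clique_def by blast
  then have fQ0: "finite Q0" using V_fin finite_subset by blast
  have xu: "x \<noteq> u" using e E_irr by auto
  have "card {x, u} \<le> card Q0" using Q0 fQ0 by (intro card_mono) auto
  then have "card Q0 \<ge> 2" using xu by simp
  then have "1 + real (al * m * r) / (- th) \<ge> 2" using dc[OF Q0(1)] by simp
  then have ge1: "real (al * m * r) / (- th) \<ge> 1" by simp
  have thneg: "- th > 0"
  proof (rule ccontr)
    assume "\<not> - th > 0"
    then have "- th \<le> 0" by simp
    then have "real (al * m * r) / (- th) \<le> 0" by (simp add: divide_nonneg_nonpos)
    then show False using ge1 by simp
  qed
  have "real (al * m * r) / real r \<le> real (al * m * r) / (- th)"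
    by (rule frac_le) (use thneg thr in auto)
  moreover have "real (al * m * r) / real r = real (al * m)" using r2 by simp
  ultimately show ?thesis using dc[OF Q] by simp
qed

lemma C_V: "Q \<in> C \<Longrightarrow> Q \<subseteq> V"
  using geom unfolding geometric_def delsarte_clique_def is_clique_def by blast

lemma C_line: assumes Q: "Q \<in> C" and yQ: "y \<in> Q" shows "\<exists>c<r. Q = Line y True c"
proof -
  have y: "y \<in> V" using C_V[OF Q] yQ by blast
  have cl: "is_clique V E Q" using geom Q unfolding geometric_def delsarte_clique_def by blast
  obtain t c where tc: "c < N t" "Q \<subseteq> Line y t c" using clique_in_line[OF y cl yQ] by blast
  have le: "card Q \<le> 1 + al * N (\<not> t)" using card_mono[OF Line_fin tc(2)] Line_card[OF y tc(1)] by simp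
  have lb: "card Q \<ge> 1 + al * m" using C_card_lb[OF Q] by linarith
  have t: "t = True"
  proof (rule ccontr)
    assume "t \<noteq> True"
    then have "N (\<not> t) = r" unfolding N_def by simp
    then have "card Q \<le> 1 + al * r" using le by simp
    then have "1 + al * m \<le> 1 + al * r" using lb by linarith
    moreover have "al * r < al * m" using al1 mr by simp
    ultimately show False by simp
  qed
  have cl: "card (Line y t c) = 1 + al * m" using Line_card[OF y tc(1)] t by (simp add: N_def)
  have "card Q \<le> card (Line y t c)" using card_mono[OF Line_fin tc(2)] .
  then have "card Q = card (Line y t c)" using cl lb by linarith
  then have QL: "Q = Line y t c" using card_subset_eq[OF Line_fin tc(2)] by blast
  have "c < r" using tc(1) t by (simp add: N_def)
  then show ?thesis using QL t by blast
qed

lemma C_card: assumes Q: "Q \<in> C" shows "card Q = 1 + al * m"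
proof -
  have "card Q \<ge> 1 + al * m" using C_card_lb[OF Q] by linarith
  then obtain y where y: "y \<in> Q" by (metis card.empty ex_in_conv not_one_le_zero le_add1 le_trans)
  obtain c where c: "c < r" "Q = Line y True c" using C_line[OF Q y] by blast
  have "y \<in> V" using C_V[OF Q] y by blast
  then show ?thesis using Line_card[of y c True] c unfolding N_def by simp
qed

lemma Line_in_C: assumes y: "y \<in> V" and c: "c < r" shows "Line y True c \<in> C"
proof -
  obtain u where u: "u \<in> Nb y" "cd y True u = c" using exists_pt[OF y, of c True 0] c N_ge2[of False] unfolding N_def by auto
  have e: "E y u" using Gam1[OF y] u by blast
  obtain Q where Q: "Q \<in> C" "y \<in> Q" "u \<in> Q" using geom e unfolding geometric_def by blast
  obtain c' where c': "c' < r" "Q = Line y True c'" using C_line[OF Q(1,2)] by blast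
  have "u \<noteq> y" using e E_irr by auto
  moreover have "u \<in> Line y True c'" using Q(3) c'(2) by simp
  ultimately have "cd y True u = c'" by (simp add: Line_mem)
  then show ?thesis using Q c' u by simp
qed

lemma assembly_iff: assumes y: "y \<in> V"
  shows "(assembly V E C M \<and> y \<in> M) \<longleftrightarrow> (\<exists>c<m. M = Line y False c)"
proof
  assume a: "assembly V E C M \<and> y \<in> M"
  then obtain t c where tc: "c < N t" "M = Line y t c"
    using maxclique_char[OF y] unfolding assembly_def by blast
  have "t = False"
  proof (rule ccontr)
    assume "t \<noteq> False"
    then have "M \<in> C" using Line_in_C[OF y, of c] tc unfolding N_def by simp
    then show False using a unfolding assembly_def by blast
  qed
  then show "\<exists>c<m. M = Line y False c" using tc unfolding N_def by auto
next
  assume "\<exists>c<m. M = Line y False c"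
  then obtain c where c: "c < m" "M = Line y False c" by blast
  have mx: "max_clique V E M" using Line_max[OF y, of c False] c unfolding N_def by simp
  have "M \<notin> C"
  proof
    assume "M \<in> C"
    then have "card M = 1 + al * m" by (rule C_card)
    moreover have "card M = 1 + al * r" using Line_card[OF y, of c False] c unfolding N_def by simp
    ultimately show False using al1 mr by simp
  qed
  moreover have "y \<in> M" using c by (simp add: Line_def)
  ultimately show "assembly V E C M \<and> y \<in> M" using mx unfolding assembly_def by simp
qed

end


context drgl begin

definition down :: "'a \<Rightarrow> 'a \<Rightarrow> bool \<Rightarrow> nat set" where
  "down x y t = {c. c < N t \<and> (\<exists>u\<in>Nb y. cd y t u = c \<and> gdist E x u + 1 = gdist E x y)}"

definition Bset :: "'a \<Rightarrow> 'a \<Rightarrow> 'a set" where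
  "Bset x y = {u \<in> Nb y. gdist E x u = gdist E x y + 1}"

definition Pgood :: "'a \<Rightarrow> 'a \<Rightarrow> bool" where
  "Pgood x y \<longleftrightarrow> card (down x y True) = q (gdist E x y) \<and> card (down x y False) = q (gdist E x y)
     \<and> Bset x y = {u \<in> Nb y. cd y False u \<notin> down x y False \<and> cd y True u \<notin> down x y True}"

lemma down_sub: "down x y t \<subseteq> {..<N t}" unfolding down_def by auto

lemma down_fin: "finite (down x y t)" by (rule finite_subset[OF down_sub]) simp

lemma nb_dist: assumes x: "x \<in> V" and y: "y \<in> V" and u: "u \<in> Nb y"
  shows "gdist E x u \<le> gdist E x y + 1" "gdist E x y \<le> gdist E x u + 1"
proof -
  have e: "E y u" using Gam1[OF y] u by blast
  show "gdist E x u \<le> gdist E x y + 1" using gd_tri[OF x e] .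
  show "gdist E x y \<le> gdist E x u + 1" using gd_tri2[OF x e] .
qed

lemma swap_t: "(cd w False u \<notin> A False \<and> cd w True u \<notin> A True) \<longleftrightarrow> (cd w t u \<notin> A t \<and> cd w (\<not> t) u \<notin> A (\<not> t))"
  by (cases t) auto

lemma line_count:
  assumes x: "x \<in> V" and w: "w \<in> V" and hD: "gdist E x w < D" and P: "Pgood x w"
    and c: "c < N t" and lo: "\<forall>u\<in>Line w t c. gdist E x w \<le> gdist E x u"
  shows "card {u \<in> Line w t c. gdist E x u = gdist E x w} = 1 + al * q (gdist E x w)"
proof -
  define h where "h = gdist E x w"
  have cnd: "c \<notin> down x w t"
  proof
    assume "c \<in> down x w t"
    then obtain u where u: "u \<in> Nb w" "cd w t u = c" "gdist E x u + 1 = h" unfolding down_def h_def by blast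
    then have "u \<in> Line w t c" unfolding Line_mem by simp
    then have "h \<le> gdist E x u" using lo unfolding h_def by blast
    then show False using u(3) by simp
  qed
  have key: "gdist E x u = h \<longleftrightarrow> cd w (\<not> t) u \<in> down x w (\<not> t)" if u: "u \<in> Nb w" "cd w t u = c" for u
  proof -
    have uL: "u \<in> Line w t c" using u unfolding Line_mem by simp
    have d1: "h \<le> gdist E x u" using lo uL unfolding h_def by blast
    have d2: "gdist E x u \<le> h + 1" using nb_dist(1)[OF x w u(1)] unfolding h_def .
    have "gdist E x u = h + 1 \<longleftrightarrow> u \<in> Bset x w" unfolding Bset_def h_def using u by simp
    also have "\<dots> \<longleftrightarrow> (cd w False u \<notin> down x w False \<and> cd w True u \<notin> down x w True)"
      using P u unfolding Pgood_def by simp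
    also have "\<dots> \<longleftrightarrow> (cd w t u \<notin> down x w t \<and> cd w (\<not> t) u \<notin> down x w (\<not> t))"
      by (rule swap_t)
    also have "\<dots> \<longleftrightarrow> cd w (\<not> t) u \<notin> down x w (\<not> t)" using cnd u by simp
    finally show ?thesis using d1 d2 by auto
  qed
  have eqset: "{u \<in> Line w t c. gdist E x u = h} = insert w {u \<in> Nb w. cd w t u \<in> {c} \<and> cd w (\<not> t) u \<in> down x w (\<not> t)}"
  proof (rule Set.set_eqI)
    fix u
    show "u \<in> {u \<in> Line w t c. gdist E x u = h} \<longleftrightarrow> u \<in> insert w {u \<in> Nb w. cd w t u \<in> {c} \<and> cd w (\<not> t) u \<in> down x w (\<not> t)}"
    proof (cases "u = w")
      case True then show ?thesis unfolding h_def Line_mem by simp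
    next
      case uw: False
      show ?thesis
      proof (cases "u \<in> Nb w \<and> cd w t u = c")
        case True
        then show ?thesis using key[of u] uw unfolding Line_mem by auto
      next
        case nb: False
        then show ?thesis using uw unfolding Line_mem by auto
      qed
    qed
  qed
  have "card {u \<in> Nb w. cd w t u \<in> {c} \<and> cd w (\<not> t) u \<in> down x w (\<not> t)} = al * 1 * card (down x w (\<not> t))"
    using card_gen[OF w, of "{c}" t "down x w (\<not> t)"] c down_sub by simp
  also have "card (down x w (\<not> t)) = q h"
    using P unfolding Pgood_def h_def by (cases t) auto
  finally have cs: "card {u \<in> Nb w. cd w t u \<in> {c} \<and> cd w (\<not> t) u \<in> down x w (\<not> t)} = al * q h" by simp
  have "w \<notin> {u \<in> Nb w. cd w t u \<in> {c} \<and> cd w (\<not> t) u \<in> down x w (\<not> t)}" using notin_Nb by blast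
  then have "card {u \<in> Line w t c. gdist E x u = h} = 1 + al * q h"
    unfolding eqset using cs Nb_fin by simp
  then show ?thesis unfolding h_def .
qed

end


context drgl begin

lemma Cset_card: assumes x: "x \<in> V" and y: "y \<in> V" and d: "gdist E x y = Suc h"
  shows "card {u \<in> Nb y. gdist E x u = h} = q (Suc h) * (1 + al * q h)"
proof -
  have "card (Gam V E (gdist E x y - 1) x \<inter> Gam V E 1 y) = q (gdist E x y) * (1 + al * q (gdist E x y - 1))"
    using cc[rule_format, OF x y] d by simp
  moreover have "Gam V E (gdist E x y - 1) x \<inter> Gam V E 1 y = {u \<in> Nb y. gdist E x u = h}"
    using d unfolding Gam_def by auto
  ultimately show ?thesis using d by simp
qed

lemma down_count:
  assumes x: "x \<in> V" and y: "y \<in> V" and d: "gdist E x y = Suc h" and hD: "h < D"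
    and IH: "\<forall>w\<in>V. gdist E x w = h \<longrightarrow> Pgood x w"
  shows "card (down x y t) = q (Suc h)"
proof -
  define S where "S c = {u \<in> Nb y. cd y t u = c \<and> gdist E x u = h}" for c
  have Cs: "{u \<in> Nb y. gdist E x u = h} = (\<Union>c\<in>down x y t. S c)"
  proof (rule Set.set_eqI)
    fix u
    show "u \<in> {u \<in> Nb y. gdist E x u = h} \<longleftrightarrow> u \<in> (\<Union>c\<in>down x y t. S c)"
    proof
      assume u: "u \<in> {u \<in> Nb y. gdist E x u = h}"
      then have "cd y t u \<in> down x y t" unfolding down_def using cd_range[OF y] d by auto
      then show "u \<in> (\<Union>c\<in>down x y t. S c)" using u unfolding S_def by blast
    next
      assume "u \<in> (\<Union>c\<in>down x y t. S c)"
      then show "u \<in> {u \<in> Nb y. gdist E x u = h}" unfolding S_def by blast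
    qed
  qed
  have Sc: "card (S c) = 1 + al * q h" if c: "c \<in> down x y t" for c
  proof -
    have cN: "c < N t" using c unfolding down_def by blast
    obtain w where w: "w \<in> Nb y" "cd y t w = c" "gdist E x w + 1 = gdist E x y"
      using c unfolding down_def by blast
    have wh: "gdist E x w = h" using w(3) d by simp
    have wV: "w \<in> V" using w(1) Nb_V by blast
    have wL: "w \<in> Line y t c" using w unfolding Line_mem by simp
    obtain c' where c': "c' < N t" "Line y t c = Line w t c'" using Line_transfer[OF y cN wL] by blast
    have SL: "S c = {u \<in> Line y t c. gdist E x u = h}"
      unfolding S_def Line_def using d by auto
    have lo: "\<forall>u\<in>Line w t c'. gdist E x w \<le> gdist E x u"
    proof
      fix u assume "u \<in> Line w t c'"
      then have "u \<in> Line y t c" using c' by simp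
      then have "u = y \<or> u \<in> Nb y" unfolding Line_mem by blast
      then show "gdist E x w \<le> gdist E x u"
      proof
        assume "u = y" then show ?thesis using d wh by simp
      next
        assume "u \<in> Nb y" then show ?thesis using nb_dist(2)[OF x y] d wh by fastforce
      qed
    qed
    have "card {u \<in> Line w t c'. gdist E x u = gdist E x w} = 1 + al * q (gdist E x w)"
      using line_count[OF x wV _ _ c'(1) lo] IH wV wh hD by simp
    then show ?thesis using SL c' wh by simp
  qed
  have fin: "finite (S c)" for c unfolding S_def using Nb_fin by simp
  have disj: "\<forall>c\<in>down x y t. \<forall>c'\<in>down x y t. c \<noteq> c' \<longrightarrow> S c \<inter> S c' = {}"
    unfolding S_def by auto
  have "card (\<Union>c\<in>down x y t. S c) = (\<Sum>c\<in>down x y t. card (S c))"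
    by (rule card_UN_disjoint[OF down_fin]) (use fin disj in auto)
  also have "\<dots> = card (down x y t) * (1 + al * q h)" using Sc by simp
  finally have "card (down x y t) * (1 + al * q h) = q (Suc h) * (1 + al * q h)"
    using Cs Cset_card[OF x y d] by simp
  moreover have nz: "(1 + al * q h) \<noteq> 0" by simp
  ultimately show ?thesis by (metis mult_right_cancel)
qed

lemma Pgood_base: assumes x: "x \<in> V" shows "Pgood x x"
proof -
  have dn: "down x x t = {}" for t unfolding down_def by simp
  have "Bset x x = Nb x" unfolding Bset_def Gam_def by auto
  then show ?thesis unfolding Pgood_def using dn q0 by simp
qed

lemma Pgood_step:
  assumes x: "x \<in> V" and y: "y \<in> V" and d: "gdist E x y = Suc h" and hD: "Suc h < D"
    and IH: "\<forall>w\<in>V. gdist E x w = h \<longrightarrow> Pgood x w"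
  shows "Pgood x y"
proof -
  have cT: "card (down x y True) = q (Suc h)" using down_count[OF x y d _ IH] hD by simp
  have cF: "card (down x y False) = q (Suc h)" using down_count[OF x y d _ IH] hD by simp
  define S where "S = {u \<in> Nb y. cd y False u \<notin> down x y False \<and> cd y True u \<notin> down x y True}"
  have notdown: "cd y t u \<notin> down x y t" if u: "u \<in> Bset x y" for u t
  proof
    assume "cd y t u \<in> down x y t"
    then obtain v where v: "v \<in> Nb y" "cd y t v = cd y t u" "gdist E x v + 1 = gdist E x y"
      unfolding down_def by blast
    have uN: "u \<in> Nb y" and du: "gdist E x u = gdist E x y + 1" using u unfolding Bset_def by auto
    have "u \<noteq> v" using du v(3) by auto
    then have "E u v" using phi_adj[OF y uN v(1)] v(2) by (cases t) auto
    then have "gdist E x u \<le> gdist E x v + 1" using gd_tri[OF x] E_sym by blast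
    then show False using du v(3) by simp
  qed
  have sub: "Bset x y \<subseteq> S" unfolding S_def using notdown unfolding Bset_def by blast
  have "card (Bset x y) = al * (m - q (Suc h)) * (r - q (Suc h))"
  proof -
    have "Gam V E (gdist E x y + 1) x \<inter> Gam V E 1 y = Bset x y"
      unfolding Bset_def Gam_def by auto
    then show ?thesis using bb[rule_format, OF x y] d hD by simp
  qed
  moreover have "card S = al * (m - q (Suc h)) * (r - q (Suc h))"
  proof -
    have "S = {u \<in> Nb y. cd y False u \<in> {..<m} - down x y False \<and> cd y True u \<in> {..<r} - down x y True}"
      unfolding S_def using cd_range[OF y, of _ False] cd_range[OF y, of _ True] unfolding N_def by auto
    moreover have "card ({..<m} - down x y False) = m - q (Suc h)"
    proof -
      have sF: "down x y False \<subseteq> {..<m}" using down_sub[of x y False] unfolding N_def by simp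
      show ?thesis using card_Diff_subset[OF down_fin sF] cF by simp
    qed
    moreover have "card ({..<r} - down x y True) = r - q (Suc h)"
    proof -
      have sT: "down x y True \<subseteq> {..<r}" using down_sub[of x y True] unfolding N_def by simp
      show ?thesis using card_Diff_subset[OF down_fin sT] cT by simp
    qed
    ultimately show ?thesis using card_XY[OF y, of "{..<m} - down x y False" "{..<r} - down x y True"] by auto
  qed
  moreover have "finite S" unfolding S_def using Nb_fin by simp
  ultimately have "Bset x y = S" using card_subset_eq[OF _ sub] by simp
  then show ?thesis unfolding Pgood_def S_def using cT cF d by simp
qed

lemma Pgood_all: "\<forall>h. h < D \<longrightarrow> (\<forall>x\<in>V. \<forall>y\<in>V. gdist E x y = h \<longrightarrow> Pgood x y)"
proof (intro allI)
  fix h show "h < D \<longrightarrow> (\<forall>x\<in>V. \<forall>y\<in>V. gdist E x y = h \<longrightarrow> Pgood x y)"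
  proof (induction h)
    case 0
    show ?case
    proof (intro impI ballI)
      fix x y assume "x \<in> V" "y \<in> V" "gdist E x y = 0"
      then show "Pgood x y" using gd_eq0 Pgood_base by blast
    qed
  next
    case (Suc h)
    show ?case
    proof (intro impI ballI)
      fix x y assume hD: "Suc h < D" and x: "x \<in> V" and y: "y \<in> V" and d: "gdist E x y = Suc h"
      have "\<forall>w\<in>V. gdist E x w = h \<longrightarrow> Pgood x w" using Suc.IH hD x by simp
      then show "Pgood x y" using Pgood_step[OF x y d hD] by blast
    qed
  qed
qed

lemma Pgood_at: "x \<in> V \<Longrightarrow> y \<in> V \<Longrightarrow> gdist E x y < D \<Longrightarrow> Pgood x y"
  using Pgood_all by blast

end


lemma cextE_gen: assumes "p \<in> ({..<a} \<times> {..<b}) \<times> {..<s}" "p' \<in> ({..<a} \<times> {..<b}) \<times> {..<s}"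
  shows "cext_E s (grid_V a b) (grid_E a b) p p' \<longleftrightarrow> p \<noteq> p' \<and> (fst (fst p) = fst (fst p') \<or> snd (fst p) = snd (fst p'))"
proof -
  obtain a1 b1 s1 where p: "p = ((a1,b1),s1)" by (metis prod.collapse)
  obtain a2 b2 s2 where p': "p' = ((a2,b2),s2)" by (metis prod.collapse)
  show ?thesis using assms unfolding p p' cext_E_def cext_V_def grid_E_def grid_V_def by auto
qed

context drgl begin

lemma maxclique_ne: "max_clique V E M \<Longrightarrow> M \<noteq> {}"
proof
  assume mc: "max_clique V E M" and e: "M = {}"
  obtain v where v: "v \<in> V" using Vne by blast
  have "is_clique V E {v}" using v unfolding is_clique_def by simp
  then have "{v} = M" using mc e unfolding max_clique_def by blast
  then show False using e by simp
qed

lemma partA: assumes M: "assembly V E C M" and x: "x \<in> V" and iD: "i \<le> D" and sd: "setdist E x M = i"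
  shows "card {y \<in> M. gdist E x y = i} = 1 + al * q i"
proof -
  have Mne: "M \<noteq> {}" using M maxclique_ne unfolding assembly_def by blast
  have MV: "M \<subseteq> V" using M unfolding assembly_def max_clique_def is_clique_def by blast
  have Mfin: "finite M" using MV V_fin finite_subset by blast
  have "i \<in> gdist E x ` M" using sd Mfin Mne unfolding setdist_def by (metis Min_in finite_imageI image_is_empty)
  then obtain z where z: "z \<in> M" "gdist E x z = i" by blast
  have lo: "\<forall>u\<in>M. i \<le> gdist E x u"
  proof
    fix u assume "u \<in> M"
    then have "gdist E x u \<in> gdist E x ` M" by blast
    then show "i \<le> gdist E x u" using Min_le[OF finite_imageI[OF Mfin]] sd unfolding setdist_def by blast
  qed
  have zV: "z \<in> V" using z MV by blast
  obtain c where c: "c < m" "M = Line z False c" using assembly_iff[OF zV] M z by blast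
  show ?thesis
  proof (cases "i < D")
    case True
    have P: "Pgood x z" using Pgood_at[OF x zV] True z by simp
    have cN: "c < N False" using c unfolding N_def by simp
    have lo': "\<forall>u\<in>Line z False c. gdist E x z \<le> gdist E x u" using lo c z by simp
    show ?thesis using line_count[OF x zV _ P cN lo'] True z c by simp
  next
    case False
    then have iD': "i = D" using iD by simp
    have "{y \<in> M. gdist E x y = i} = M"
    proof -
      have "gdist E x u = i" if "u \<in> M" for u using diam x MV that lo iD' by (meson le_antisym subsetD)
      then show ?thesis by blast
    qed
    moreover have "card M = 1 + al * r" using Line_card[OF zV, of c False] c unfolding N_def by simp
    ultimately show ?thesis using iD' qD by simp
  qed
qed

lemma partB: assumes x: "x \<in> V" and y: "y \<in> V" and j1: "1 \<le> j" and jD: "j \<le> D" and d: "gdist E x y = j"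
  shows "card {M. assembly V E C M \<and> y \<in> M \<and> setdist E x M = j - 1} = q j"
proof -
  obtain h where h: "j = Suc h" using j1 by (metis Suc_le_D One_nat_def)
  have hD: "h < D" using jD h by simp
  have d': "gdist E x y = Suc h" using d h by simp
  have eq: "{M. assembly V E C M \<and> y \<in> M \<and> setdist E x M = j - 1} = (\<lambda>c. Line y False c) ` down x y False"
  proof (rule Set.set_eqI)
    fix M
    show "M \<in> {M. assembly V E C M \<and> y \<in> M \<and> setdist E x M = j - 1} \<longleftrightarrow> M \<in> (\<lambda>c. Line y False c) ` down x y False"
    proof
      assume "M \<in> {M. assembly V E C M \<and> y \<in> M \<and> setdist E x M = j - 1}"
      then have a: "assembly V E C M" "y \<in> M" "setdist E x M = h" using h by auto
      obtain c where c: "c < m" "M = Line y False c" using assembly_iff[OF y] a by blast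
      have Mfin: "finite M" using c Line_fin by simp
      have "h \<in> gdist E x ` M" using a(3) Mfin a(2) unfolding setdist_def by (metis Min_in finite_imageI image_is_empty empty_iff)
      then obtain u where u: "u \<in> M" "gdist E x u = h" by blast
      have "u \<noteq> y" using u d' by auto
      moreover have "u \<in> Line y False c" using u c by simp
      ultimately have "u \<in> Nb y" "cd y False u = c" by (auto simp: Line_mem)
      then have "c \<in> down x y False" unfolding down_def N_def using c u d' by auto
      then show "M \<in> (\<lambda>c. Line y False c) ` down x y False" using c by blast
    next
      assume "M \<in> (\<lambda>c. Line y False c) ` down x y False"
      then obtain c where c: "c \<in> down x y False" "M = Line y False c" by blast
      have cm: "c < m" using c unfolding down_def N_def by simp
      obtain u where u: "u \<in> Nb y" "cd y False u = c" "gdist E x u + 1 = gdist E x y"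
        using c unfolding down_def by blast
      have as: "assembly V E C M \<and> y \<in> M" using assembly_iff[OF y] cm c by blast
      have Mfin: "finite M" using c Line_fin by simp
      have uM: "u \<in> M" using u c by (simp add: Line_def)
      have lo: "h \<le> gdist E x v" if v: "v \<in> M" for v
      proof -
        have "v = y \<or> v \<in> Nb y" using v c by (auto simp: Line_def)
        then show ?thesis
        proof
          assume "v = y" then show ?thesis using d' by simp
        next
          assume "v \<in> Nb y" then show ?thesis using nb_dist(2)[OF x y] d' by fastforce
        qed
      qed
      have "Min (gdist E x ` M) = h"
      proof (rule Min_eqI)
        show "finite (gdist E x ` M)" using Mfin by simp
        show "\<And>a. a \<in> gdist E x ` M \<Longrightarrow> h \<le> a" using lo by blast
        show "h \<in> gdist E x ` M" using uM u(3) d' by force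
      qed
      then show "M \<in> {M. assembly V E C M \<and> y \<in> M \<and> setdist E x M = j - 1}"
        using as h unfolding setdist_def by simp
    qed
  qed
  have inj: "inj_on (\<lambda>c. Line y False c) (down x y False)"
  proof (rule inj_onI)
    fix c c' assume "c \<in> down x y False" "c' \<in> down x y False" "Line y False c = Line y False c'"
    then show "c = c'" using Line_inj[OF y, of c False c'] unfolding down_def by blast
  qed
  have IH: "\<forall>w\<in>V. gdist E x w = h \<longrightarrow> Pgood x w" using Pgood_at[OF x] hD by simp
  have "card (down x y False) = q (Suc h)" using down_count[OF x y d' hD IH] .
  then show ?thesis unfolding eq using card_image[OF inj] h by simp
qed

end


context drgl begin

lemma partC: assumes x: "x \<in> V" and y: "y \<in> V" and hD: "h < D" and d: "gdist E x y = h"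
  shows "is_cext_grid (Gam V E (h + 1) x \<inter> Gam V E 1 y) E al (m - q h) (r - q h)"
proof -
  have P: "Pgood x y" using Pgood_at[OF x y] hD d by simp
  define DF where "DF = down x y False"
  define DT where "DT = down x y True"
  define S where "S = Gam V E (h + 1) x \<inter> Gam V E 1 y"
  have S_eq: "S = {u \<in> Nb y. cd y False u \<notin> DF \<and> cd y True u \<notin> DT}"
  proof -
    have "S = Bset x y" unfolding S_def Bset_def Gam_def using d by auto
    then show ?thesis using P unfolding Pgood_def DF_def DT_def by simp
  qed
  have sF: "DF \<subseteq> {..<m}" using down_sub[of x y False] unfolding DF_def N_def by simp
  have sT: "DT \<subseteq> {..<r}" using down_sub[of x y True] unfolding DT_def N_def by simp
  have cF: "card ({..<m} - DF) = m - q h"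
    using card_Diff_subset[OF down_fin sF[unfolded DF_def]] P d unfolding Pgood_def DF_def by simp
  have cT: "card ({..<r} - DT) = r - q h"
    using card_Diff_subset[OF down_fin sT[unfolded DT_def]] P d unfolding Pgood_def DT_def by simp
  obtain eF where eF: "bij_betw eF ({..<m} - DF) {..<m - q h}"
    using finite_same_card_bij[of "{..<m} - DF" "{..<m - q h}"] cF by auto
  obtain eT where eT: "bij_betw eT ({..<r} - DT) {..<r - q h}"
    using finite_same_card_bij[of "{..<r} - DT" "{..<r - q h}"] cT by auto
  define f where "f u = ((eF (cd y False u), eT (cd y True u)), snd (phi y u))" for u
  have uS: "u \<in> Nb y \<and> cd y False u \<in> {..<m} - DF \<and> cd y True u \<in> {..<r} - DT" if "u \<in> S" for u
    using that S_eq cd_range[OF y, of u False] cd_range[OF y, of u True] unfolding N_def by auto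
  have injF: "inj_on eF ({..<m} - DF)" using eF bij_betw_imp_inj_on by blast
  have injT: "inj_on eT ({..<r} - DT)" using eT bij_betw_imp_inj_on by blast
  have f_eq: "f u = f v \<longleftrightarrow> u = v" if u: "u \<in> S" and v: "v \<in> S" for u v
  proof
    assume fe: "f u = f v"
    have "eF (cd y False u) = eF (cd y False v)" using fe unfolding f_def by simp
    then have a: "cd y False u = cd y False v" using injF uS[OF u] uS[OF v] inj_on_eq_iff by metis
    have "eT (cd y True u) = eT (cd y True v)" using fe unfolding f_def by simp
    then have b: "cd y True u = cd y True v" using injT uS[OF u] uS[OF v] inj_on_eq_iff by metis
    have s: "snd (phi y u) = snd (phi y v)" using fe unfolding f_def by simp
    obtain a1 b1 s1 where p1: "phi y u = ((a1,b1),s1)" "cd y False u = a1" "cd y True u = b1" using phi_split by blast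
    obtain a2 b2 s2 where p2: "phi y v = ((a2,b2),s2)" "cd y False v = a2" "cd y True v = b2" using phi_split by blast
    have "phi y u = phi y v" using p1 p2 a b s by simp
    then show "u = v" using phi_inj[OF y] uS[OF u] uS[OF v] inj_on_eq_iff by metis
  qed simp
  have fS: "f ` S = ({..<m - q h} \<times> {..<r - q h}) \<times> {..<al}"
  proof
    show "f ` S \<subseteq> ({..<m - q h} \<times> {..<r - q h}) \<times> {..<al}"
    proof
      fix z assume "z \<in> f ` S"
      then obtain u where u: "u \<in> S" "z = f u" by blast
      have "eF (cd y False u) \<in> {..<m - q h}" using bij_betw_apply[OF eF] uS[OF u(1)] by blast
      moreover have "eT (cd y True u) \<in> {..<r - q h}" using bij_betw_apply[OF eT] uS[OF u(1)] by blast
      moreover have "snd (phi y u) < al"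
      proof -
        obtain a1 b1 s1 where p1: "phi y u = ((a1,b1),s1)" "cd y False u = a1" "cd y True u = b1" using phi_split by blast
        have "phi y u \<in> ({..<m} \<times> {..<r}) \<times> {..<al}" using phi_range[OF y] uS[OF u(1)] by blast
        then show ?thesis using p1 by simp
      qed
      ultimately show "z \<in> ({..<m - q h} \<times> {..<r - q h}) \<times> {..<al}" using u unfolding f_def by simp
    qed
  next
    show "({..<m - q h} \<times> {..<r - q h}) \<times> {..<al} \<subseteq> f ` S"
    proof
      fix z assume z: "z \<in> ({..<m - q h} \<times> {..<r - q h}) \<times> {..<al}"
      obtain a b s where zabs: "z = ((a,b),s)" by (metis prod.collapse)
      have a: "a \<in> eF ` ({..<m} - DF)" using z zabs eF unfolding bij_betw_def by auto
      then obtain a0 where a0: "a0 \<in> {..<m} - DF" "a = eF a0" by blast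
      have b: "b \<in> eT ` ({..<r} - DT)" using z zabs eT unfolding bij_betw_def by auto
      then obtain b0 where b0: "b0 \<in> {..<r} - DT" "b = eT b0" by blast
      have "((a0,b0),s) \<in> ({..<m} \<times> {..<r}) \<times> {..<al}" using a0 b0 z zabs by auto
      then have "((a0,b0),s) \<in> phi y ` Nb y" using phi_img[OF y] by (rule ssubst[rotated])
      then obtain u where u0: "((a0,b0),s) = phi y u" "u \<in> Nb y" by (rule imageE)
      then have u: "u \<in> Nb y" "phi y u = ((a0,b0),s)" by simp_all
      have cdu: "cd y False u = a0" "cd y True u = b0" using u(2) unfolding cd_def by auto
      have "u \<in> S" using S_eq u(1) cdu a0 b0 by simp
      moreover have "f u = z" unfolding f_def using cdu u(2) a0 b0 zabs by simp
      ultimately show "z \<in> f ` S" by blast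
    qed
  qed
  have bij: "bij_betw f S (cext_V al (grid_V (m - q h) (r - q h)))"
    unfolding bij_betw_def cext_V_def grid_V_def
  proof
    show "inj_on f S"
    proof (rule inj_onI)
      fix u v assume "u \<in> S" "v \<in> S" "f u = f v"
      then show "u = v" using f_eq[of u v] by simp
    qed
  qed (use fS in simp)
  have edge: "induced E S u v \<longleftrightarrow> cext_E al (grid_V (m - q h) (r - q h)) (grid_E (m - q h) (r - q h)) (f u) (f v)"
    if u: "u \<in> S" and v: "v \<in> S" for u v
  proof -
    have fu: "f u \<in> ({..<m - q h} \<times> {..<r - q h}) \<times> {..<al}" using fS u by blast
    have fv: "f v \<in> ({..<m - q h} \<times> {..<r - q h}) \<times> {..<al}" using fS v by blast
    have "induced E S u v \<longleftrightarrow> E u v" using u v unfolding induced_def by simp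
    also have "\<dots> \<longleftrightarrow> (u \<noteq> v \<and> (cd y False u = cd y False v \<or> cd y True u = cd y True v))"
      using phi_adj[OF y] uS[OF u] uS[OF v] by blast
    also have "(cd y False u = cd y False v) \<longleftrightarrow> eF (cd y False u) = eF (cd y False v)"
      using injF uS[OF u] uS[OF v] inj_on_eq_iff by metis
    also have "(cd y True u = cd y True v) \<longleftrightarrow> eT (cd y True u) = eT (cd y True v)"
      using injT uS[OF u] uS[OF v] inj_on_eq_iff by metis
    also have "(u \<noteq> v) \<longleftrightarrow> f u \<noteq> f v" using f_eq[OF u v] by simp
    also have "(f u \<noteq> f v \<and> (eF (cd y False u) = eF (cd y False v) \<or> eT (cd y True u) = eT (cd y True v)))
       \<longleftrightarrow> cext_E al (grid_V (m - q h) (r - q h)) (grid_E (m - q h) (r - q h)) (f u) (f v)"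
      using cextE_gen[OF fu fv] unfolding f_def by simp
    finally show ?thesis .
  qed
  show ?thesis unfolding is_cext_grid_def graph_iso_def S_def[symmetric]
    using bij edge by blast
qed

end


definition qf :: "int \<Rightarrow> nat \<Rightarrow> nat" where "qf b i = (\<Sum>k<i. nat b ^ k)"

lemma qnum_eq: assumes b: "b \<ge> 2" shows "qnum b i = real (qf b i)"
proof -
  have "real (qf b i) = (\<Sum>k<i. (real_of_int b) ^ k)"
    unfolding qf_def using b by simp
  also have "\<dots> = (real_of_int b ^ i - 1) / (real_of_int b - 1)"
    by (rule geometric_sum) (use b in simp)
  finally show ?thesis unfolding qnum_def by simp
qed

lemma qf_Suc: "qf b (Suc i) = qf b i + nat b ^ i" unfolding qf_def by simp

lemma qf_smono: assumes b: "b \<ge> 2" shows "strict_mono (qf b)"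
  unfolding strict_mono_Suc_iff
proof
  fix n have "nat b ^ n > 0" using b by simp
  then show "qf b n < qf b (Suc n)" unfolding qf_Suc by simp
qed

lemma qf_0: "qf b 0 = 0" unfolding qf_def by simp

theorem theorem26:
  fixes V :: "'a set" and E :: "'a \<Rightarrow> 'a \<Rightarrow> bool" and \<C> :: "'a set set"
    and D :: nat and b :: int and \<alpha> \<beta> :: real
  assumes drg: "drg_classical V E D b \<alpha> \<beta>"
    and hb: "b \<ge> 2" and h\<alpha>1: "real_of_int b - 1 \<ge> \<alpha>" and h\<alpha>2: "\<alpha> \<ge> 1" and hD: "D \<ge> 3"
    and geom: "geometric V E \<C>"
    and local: "\<forall>x\<in>V. \<exists>s m n :: nat. real s = \<alpha> \<and> real m = \<beta> / \<alpha> \<and> real n = qnum b D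
                   \<and> is_cext_grid (Gam V E 1 x) E s m n"
    and h\<beta>: "\<beta> > \<alpha> * qnum b D"
  shows "(\<forall>M x i. assembly V E \<C> M \<and> x \<in> V \<and> i \<le> D \<and> setdist E x M = i \<longrightarrow>
            real (card {y \<in> M. gdist E x y = i}) = 1 + \<alpha> * qnum b i)
       \<and> (\<forall>x\<in>V. \<forall>y\<in>V. \<forall>j. 1 \<le> j \<and> j \<le> D \<and> gdist E x y = j \<longrightarrow>
            real (card {M. assembly V E \<C> M \<and> y \<in> M \<and> setdist E x M = j - 1}) = qnum b j)
       \<and> (\<forall>x\<in>V. \<forall>y\<in>V. \<forall>h. h < D \<and> gdist E x y = h \<longrightarrow>
            (\<exists>s m n :: nat. real s = \<alpha> \<and> real m = \<beta> / \<alpha> - qnum b h \<and> real n = qnum b D - qnum b h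
               \<and> is_cext_grid (Gam V E (h + 1) x \<inter> Gam V E 1 y) E s m n))"
proof -
  have sg: "simple_graph V E" and Vne: "V \<noteq> {}" and cg: "connected_graph V E"
    and b1: "b \<noteq> 1" and dm: "diameter V E = D"
    using drg unfolding drg_classical_def by blast+
  have drgc: "\<forall>x\<in>V. \<forall>y\<in>V.
          (1 \<le> gdist E x y \<longrightarrow>
             real (card (Gam V E (gdist E x y - 1) x \<inter> Gam V E 1 y)) = cl_c b \<alpha> (gdist E x y))
        \<and> (gdist E x y < D \<longrightarrow>
             real (card (Gam V E (gdist E x y + 1) x \<inter> Gam V E 1 y)) = cl_b D b \<alpha> \<beta> (gdist E x y))"
    using drg unfolding drg_classical_def by blast
  interpret gr V E using sg cg by (unfold_locales)
  define q where "q = qf b"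
  have qn: "qnum b i = real (q i)" for i unfolding q_def using qnum_eq[OF hb] .
  have smq: "strict_mono q" unfolding q_def using qf_smono[OF hb] .
  have qlt: "i < j \<Longrightarrow> q i < q j" for i j using smq unfolding strict_mono_def by blast
  have qge: "i \<le> q i" for i using strict_mono_imp_increasing[OF smq] .
  define r where "r = q D"
  obtain x0 where x0: "x0 \<in> V" using Vne by blast
  obtain s0 m0 n0 :: nat where s0: "real s0 = \<alpha>" and m0: "real m0 = \<beta> / \<alpha>" and n0: "real n0 = qnum b D"
    using local x0 by blast
  have n0r: "n0 = r" using n0 qn[of D] unfolding r_def by simp
  have apos: "\<alpha> > 0" using h\<alpha>2 by simp
  have beta: "\<beta> = \<alpha> * real m0" using m0 apos by (simp add: field_simps)
  have al1: "s0 \<ge> 1" using s0 h\<alpha>2 by simp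
  have mr: "r < m0"
  proof -
    have "\<alpha> * real r < \<alpha> * real m0" using h\<beta> beta qn[of D] unfolding r_def by simp
    then have "real r < real m0" using apos by simp
    then show ?thesis by simp
  qed
  have r2: "r \<ge> 2" using qge[of D] hD unfolding r_def by simp
  have loc: "\<forall>x\<in>V. is_cext_grid (Gam V E 1 x) E s0 m0 r"
  proof
    fix x assume x: "x \<in> V"
    obtain s m n :: nat where "real s = \<alpha>" "real m = \<beta> / \<alpha>" "real n = qnum b D"
      and g: "is_cext_grid (Gam V E 1 x) E s m n" using local x by blast
    then have "s = s0" "m = m0" "n = r" using s0 m0 n0 n0r by simp_all
    then show "is_cext_grid (Gam V E 1 x) E s0 m0 r" using g by simp
  qed
  have diam: "\<forall>x\<in>V. \<forall>y\<in>V. gdist E x y \<le> D"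
  proof (intro ballI)
    fix x y assume x: "x \<in> V" and y: "y \<in> V"
    have fin: "finite {gdist E x y | x y. x \<in> V \<and> y \<in> V}"
      by (rule finite_image_set2) (use V_fin in simp_all)
    have "gdist E x y \<in> {gdist E x y | x y. x \<in> V \<and> y \<in> V}" using x y by blast
    then have "gdist E x y \<le> Max {gdist E x y | x y. x \<in> V \<and> y \<in> V}" using fin by simp
    then show "gdist E x y \<le> D" using dm unfolding diameter_def by simp
  qed
  have cc: "\<forall>x\<in>V. \<forall>y\<in>V. 1 \<le> gdist E x y \<longrightarrow>
       card (Gam V E (gdist E x y - 1) x \<inter> Gam V E 1 y) = q (gdist E x y) * (1 + s0 * q (gdist E x y - 1))"
  proof (intro ballI impI)
    fix x y assume x: "x \<in> V" and y: "y \<in> V" and d: "1 \<le> gdist E x y"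
    have "real (card (Gam V E (gdist E x y - 1) x \<inter> Gam V E 1 y)) = cl_c b \<alpha> (gdist E x y)"
      using drgc x y d by blast
    also have "\<dots> = real (q (gdist E x y) * (1 + s0 * q (gdist E x y - 1)))"
      unfolding cl_c_def qn s0[symmetric] by (simp add: algebra_simps)
    finally show "card (Gam V E (gdist E x y - 1) x \<inter> Gam V E 1 y) = q (gdist E x y) * (1 + s0 * q (gdist E x y - 1))"
      by (simp only: of_nat_eq_iff)
  qed
  have bb: "\<forall>x\<in>V. \<forall>y\<in>V. gdist E x y < D \<longrightarrow>
       card (Gam V E (gdist E x y + 1) x \<inter> Gam V E 1 y) = s0 * (m0 - q (gdist E x y)) * (r - q (gdist E x y))"
  proof (intro ballI impI)
    fix x y assume x: "x \<in> V" and y: "y \<in> V" and d: "gdist E x y < D"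
    define i where "i = gdist E x y"
    have ir: "q i < r" using qlt d unfolding r_def i_def by blast
    then have im: "q i < m0" using mr by simp
    have "real (card (Gam V E (gdist E x y + 1) x \<inter> Gam V E 1 y)) = cl_b D b \<alpha> \<beta> (gdist E x y)"
      using drgc x y d by blast
    also have "\<dots> = (real r - real (q i)) * (\<alpha> * real m0 - \<alpha> * real (q i))"
      unfolding cl_b_def qn beta r_def i_def by simp
    also have "\<dots> = real (s0 * (m0 - q i) * (r - q i))"
    proof -
      have "real (s0 * (m0 - q i) * (r - q i)) = real s0 * (real m0 - real (q i)) * (real r - real (q i))"
        using ir im by (simp only: of_nat_mult of_nat_diff less_imp_le)
      then show ?thesis using s0 by (simp add: algebra_simps)
    qed
    finally show "card (Gam V E (gdist E x y + 1) x \<inter> Gam V E 1 y) = s0 * (m0 - q (gdist E x y)) * (r - q (gdist E x y))"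
      unfolding i_def by (simp only: of_nat_eq_iff)
  qed
  have q0: "q 0 = 0" unfolding q_def by (rule qf_0)
  have qle: "\<forall>i<D. q i < r" using qlt unfolding r_def by blast
  interpret L: drgl V E \<C> D s0 m0 r q
    by (unfold_locales) (use Vne loc al1 r2 mr geom diam cc bb q0 qle in \<open>simp_all add: r_def\<close>)
  show ?thesis
  proof (intro conjI allI impI ballI)
    fix M x i assume a: "assembly V E \<C> M \<and> x \<in> V \<and> i \<le> D \<and> setdist E x M = i"
    then have "card {y \<in> M. gdist E x y = i} = 1 + s0 * q i" using L.partA by blast
    then show "real (card {y \<in> M. gdist E x y = i}) = 1 + \<alpha> * qnum b i"
      unfolding qn s0[symmetric] by simp
  next
    fix x y j assume x: "x \<in> V" and y: "y \<in> V" and a: "1 \<le> j \<and> j \<le> D \<and> gdist E x y = j"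
    then have "card {M. assembly V E \<C> M \<and> y \<in> M \<and> setdist E x M = j - 1} = q j"
      using L.partB[OF x y] by blast
    then show "real (card {M. assembly V E \<C> M \<and> y \<in> M \<and> setdist E x M = j - 1}) = qnum b j"
      unfolding qn by simp
  next
    fix x y h assume x: "x \<in> V" and y: "y \<in> V" and a: "h < D \<and> gdist E x y = h"
    have g: "is_cext_grid (Gam V E (h + 1) x \<inter> Gam V E 1 y) E s0 (m0 - q h) (r - q h)"
      using L.partC[OF x y] a by blast
    have hr: "q h < r" using qle a by blast
    have hm: "q h < m0" using hr mr by simp
    have e1: "real (m0 - q h) = \<beta> / \<alpha> - qnum b h" using hm m0 qn[of h] by (simp add: of_nat_diff)
    have e2: "real (r - q h) = qnum b D - qnum b h" using hr qn[of h] qn[of D] unfolding r_def by (simp add: of_nat_diff)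
    show "\<exists>s m n :: nat. real s = \<alpha> \<and> real m = \<beta> / \<alpha> - qnum b h \<and> real n = qnum b D - qnum b h
               \<and> is_cext_grid (Gam V E (h + 1) x \<inter> Gam V E 1 y) E s m n"
      using s0 e1 e2 g by blast
  qed
qed

end
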